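(* Let $n\ge1$. For an $n$-mode Gaussian channel $\phi=\phi(T,N,\mathbf d)$ define $$\mathcal I_d^{GC}(\phi):=h(\|T^{eo}\|_{\mathrm{Tr}})+h(\|T^{oe}\|_{\mathrm{Tr}}\,\|T^{ee}\|_{\mathrm{Tr}})+h(\|N^{oe}\|_{\mathrm{Tr}})+h(\|\mathbf d^{e}\|_1),$$ where $h:[0,\infty)\to\{0,1\}$ is given by $h(0)=0$ and $h(t)=1$ for $t\neq0$. Then $\mathcal I_d^{GC}$ is an imaginarity measure for Gaussian channels: (GC1) $\mathcal I_d^{GC}(\phi)\ge0$ for all $n$-mode Gaussian channels $\phi$, with equality if and only if $\phi$ is real; (GC2) $\mathcal I_d^{GC}(\Phi(\phi))\le\mathcal I_d^{GC}(\phi)$ for every $n$-mode real Gaussian superchannel $\Phi$ and every $n$-mode Gaussian channel $\phi$.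
   Context: Fix $n\ge1$. For a real $2n\times2n$ matrix $M=(m_{kl})$ write the $n\times n$ blocks $M^{oe}=(m_{2k-1,2l})_{k,l=1}^n$, $M^{eo}=(m_{2k,2l-1})_{k,l=1}^n$, $M^{ee}=(m_{2k,2l})_{k,l=1}^n$, and for $\mathbf d=(d_1,\dots,d_{2n})^{\mathrm T}$ write $\mathbf d^e=(d_2,d_4,\dots,d_{2n})^{\mathrm T}$. $\|\cdot\|_{\mathrm{Tr}}$ is the trace norm of matrices and $\|\cdot\|_1$ the $\ell_1$-norm of vectors. Let $\Delta_n=\bigoplus_{k=1}^n\begin{pmatrix}0&1\\-1&0\end{pmatrix}$ and $\Sigma_n=\bigoplus_{k=1}^n\mathrm{diag}(1,-1)$. An $n$-mode Gaussian channel is identified with a triple $\phi=\phi(T,N,\mathbf d)$, where $T=(t_{kl})$, $N=(n_{kl})$ are real $2n\times2n$ matrices with $N=N^{\mathrm T}\ge0$, $\mathbf d\in\mathbb R^{2n}$, and $N+i\Delta_n-iT\Delta_nT^{\mathrm T}\ge0$. It is called real if $d_{2k}=0$ and $n_{2k-1,2l}=0$ for all $k,l\in\{1,\dots,n\}$, and either $t_{2k,2l-1}=t_{2k,2l}=0$ for all $k,l$, or $t_{2k-1,2l}=t_{2k,2l-1}=0$ for all $k,l$. An $n$-mode Gaussian superchannel is a quadruple $\Phi=\Phi(A,O,Y,\bar{\mathbf d})$ of real $2n\times2n$ matrices $A,O,Y$ and $\bar{\mathbf d}\in\mathbb R^{2n}$ with $Y=Y^{\mathrm T}$, $OO^{\mathrm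 T}=I_{2n}$, $Y+i\Delta_n-iA\Delta_nA^{\mathrm T}\ge0$, $i\Delta_n-iO\Delta_nO^{\mathrm T}\ge0$, acting by $\Phi(\phi(T,N,\mathbf d))=\phi(AT\Sigma_nO^{\mathrm T}\Sigma_n,\ ANA^{\mathrm T}+Y,\ A\mathbf d+\bar{\mathbf d})$. It is called real if it maps every real Gaussian channel to a real Gaussian channel. *)

theory Defs
  imports Complex_Main "Jordan_Normal_Form.Matrix" "Jordan_Normal_Form.Char_Poly"
begin

text \<open>Conventions: matrices are JNF matrices with 0-based indices. The paper's 1-based
  index 2k-1 (odd) is our 2(k-1), the paper's 2k (even) is our 2(k-1)+1.\<close>

definition blk_oe :: "nat \<Rightarrow> real mat \<Rightarrow> real mat" where
  "blk_oe n M = mat n n (\<lambda>(k,l). M $$ (2*k, 2*l+1))"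
definition blk_eo :: "nat \<Rightarrow> real mat \<Rightarrow> real mat" where
  "blk_eo n M = mat n n (\<lambda>(k,l). M $$ (2*k+1, 2*l))"
definition blk_ee :: "nat \<Rightarrow> real mat \<Rightarrow> real mat" where
  "blk_ee n M = mat n n (\<lambda>(k,l). M $$ (2*k+1, 2*l+1))"
definition vec_e :: "nat \<Rightarrow> real vec \<Rightarrow> real vec" where
  "vec_e n d = vec n (\<lambda>k. d $ (2*k+1))"

text \<open>Trace norm = sum of singular values = sum of square roots of the eigenvalues
  (with multiplicity) of A^T A.\<close>
definition trace_norm :: "real mat \<Rightarrow> real" where
  "trace_norm A = sum_mset (image_mset sqrt (proots (char_poly (transpose_mat A * A))))"

definition l1_norm :: "real vec \<Rightarrow> real" where
  "l1_norm v = (\<Sum>k<dim_vec v. \<bar>v $ k\<bar>)"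

definition Delta :: "nat \<Rightarrow> real mat" where
  "Delta n = mat (2*n) (2*n) (\<lambda>(i,j). if even i \<and> j = i + 1 then 1
                                      else if odd i \<and> j + 1 = i then -1 else 0)"

definition Sigma :: "nat \<Rightarrow> real mat" where
  "Sigma n = mat (2*n) (2*n) (\<lambda>(i,j). if i = j then (if even i then 1 else -1) else 0)"

text \<open>Positive semidefiniteness of the complex matrix P + i Q (P, Q real m x m).\<close>
definition cpsd :: "nat \<Rightarrow> real mat \<Rightarrow> real mat \<Rightarrow> bool" where
  "cpsd m P Q \<longleftrightarrow> (\<forall>v :: nat \<Rightarrow> complex.
     (let q = (\<Sum>i<m. \<Sum>j<m. cnj (v i) * (complex_of_real (P $$ (i,j)) + \<i> * complex_of_real (Q $$ (i,j))) * v j)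
      in Im q = 0 \<and> Re q \<ge> 0))"

definition rpsd :: "nat \<Rightarrow> real mat \<Rightarrow> bool" where
  "rpsd m P \<longleftrightarrow> (\<forall>x :: nat \<Rightarrow> real. (\<Sum>i<m. \<Sum>j<m. x i * P $$ (i,j) * x j) \<ge> 0)"

definition gaussian_channel :: "nat \<Rightarrow> real mat \<Rightarrow> real mat \<Rightarrow> real vec \<Rightarrow> bool" where
  "gaussian_channel n T N d \<longleftrightarrow>
     T \<in> carrier_mat (2*n) (2*n) \<and> N \<in> carrier_mat (2*n) (2*n) \<and> d \<in> carrier_vec (2*n) \<and>
     N = transpose_mat N \<and> rpsd (2*n) N \<and>
     cpsd (2*n) N (Delta n - T * Delta n * transpose_mat T)"

definition real_channel :: "nat \<Rightarrow> real mat \<Rightarrow> real mat \<Rightarrow> real vec \<Rightarrow> bool" where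
  "real_channel n T N d \<longleftrightarrow>
     (\<forall>k<n. d $ (2*k+1) = 0) \<and> (\<forall>k<n. \<forall>l<n. N $$ (2*k, 2*l+1) = 0) \<and>
     ((\<forall>k<n. \<forall>l<n. T $$ (2*k+1, 2*l) = 0 \<and> T $$ (2*k+1, 2*l+1) = 0) \<or>
      (\<forall>k<n. \<forall>l<n. T $$ (2*k, 2*l+1) = 0 \<and> T $$ (2*k+1, 2*l) = 0))"

definition gaussian_superchannel :: "nat \<Rightarrow> real mat \<Rightarrow> real mat \<Rightarrow> real mat \<Rightarrow> real vec \<Rightarrow> bool" where
  "gaussian_superchannel n A Om Y db \<longleftrightarrow>
     A \<in> carrier_mat (2*n) (2*n) \<and> Om \<in> carrier_mat (2*n) (2*n) \<and> Y \<in> carrier_mat (2*n) (2*n) \<and>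
     db \<in> carrier_vec (2*n) \<and> Y = transpose_mat Y \<and> Om * transpose_mat Om = 1\<^sub>m (2*n) \<and>
     cpsd (2*n) Y (Delta n - A * Delta n * transpose_mat A) \<and>
     cpsd (2*n) (0\<^sub>m (2*n) (2*n)) (Delta n - Om * Delta n * transpose_mat Om)"

text \<open>Action of the superchannel Phi(A,Om,Y,db) on phi(T,N,d).\<close>
definition sc_T :: "nat \<Rightarrow> real mat \<Rightarrow> real mat \<Rightarrow> real mat \<Rightarrow> real mat" where
  "sc_T n A Om T = A * T * Sigma n * transpose_mat Om * Sigma n"
definition sc_N :: "real mat \<Rightarrow> real mat \<Rightarrow> real mat \<Rightarrow> real mat" where
  "sc_N A Y N = A * N * transpose_mat A + Y"
definition sc_d :: "real mat \<Rightarrow> real vec \<Rightarrow> real vec \<Rightarrow> real vec" where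
  "sc_d A db d = A *\<^sub>v d + db"

definition real_superchannel :: "nat \<Rightarrow> real mat \<Rightarrow> real mat \<Rightarrow> real mat \<Rightarrow> real vec \<Rightarrow> bool" where
  "real_superchannel n A Om Y db \<longleftrightarrow> gaussian_superchannel n A Om Y db \<and>
     (\<forall>T N d. gaussian_channel n T N d \<and> real_channel n T N d \<longrightarrow>
        gaussian_channel n (sc_T n A Om T) (sc_N A Y N) (sc_d A db d) \<and>
        real_channel n (sc_T n A Om T) (sc_N A Y N) (sc_d A db d))"

definition hh :: "real \<Rightarrow> real" where
  "hh t = (if t = 0 then 0 else 1)"

definition I_GC :: "nat \<Rightarrow> real mat \<Rightarrow> real mat \<Rightarrow> real vec \<Rightarrow> real" where
  "I_GC n T N d = hh (trace_norm (blk_eo n T)) + hh (trace_norm (blk_oe n T) * trace_norm (blk_ee n T))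
                 + hh (trace_norm (blk_oe n N)) + hh (l1_norm (vec_e n d))"

end

theory Submission
  imports Defs "Jordan_Normal_Form.Schur_Decomposition"
begin


lemma sum_mset_img_nonneg:
  fixes f :: "'a \<Rightarrow> real"
  shows "\<forall>x\<in>#A. f x \<ge> 0 \<Longrightarrow> sum_mset (image_mset f A) \<ge> 0"
  by (induction A) auto

lemma sum_mset_nonneg_zero:
  fixes f :: "'a \<Rightarrow> real"
  assumes "\<forall>x\<in>#A. f x \<ge> 0" "sum_mset (image_mset f A) = 0" "x \<in># A"
  shows "f x = 0"
  using assms
proof (induction A)
  case empty then show ?case by simp
next
  case (add a A)
  have s: "sum_mset (image_mset f A) \<ge> 0" using add.prems(1) by (intro sum_mset_img_nonneg, auto)
  have fa: "f a \<ge> 0" using add.prems(1) by simp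
  have "f a + sum_mset (image_mset f A) = 0" using add.prems(2) by simp
  then have "f a = 0" "sum_mset (image_mset f A) = 0" using s fa by linarith+
  then show ?case using add by auto
qed

lemma eig_real_nonneg:
  fixes M :: "real mat"
  assumes M: "M \<in> carrier_mat n n"
  and ev: "eigenvalue (map_mat complex_of_real (transpose_mat M * M)) e"
  shows "e = complex_of_real (Re e) \<and> Re e \<ge> 0"
proof -
  let ?S = "transpose_mat M * M"
  let ?Sc = "map_mat complex_of_real ?S"
  have S: "?S \<in> carrier_mat n n" using M by auto
  obtain v where v: "v \<in> carrier_vec n" "v \<noteq> 0\<^sub>v n" "?Sc *\<^sub>v v = e \<cdot>\<^sub>v v"
    using ev S unfolding eigenvalue_def eigenvector_def by auto
  have Sij: "?Sc $$ (i,j) = (\<Sum>k<n. complex_of_real (M$$(k,i)) * complex_of_real (M$$(k,j)))"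
    if "i<n" "j<n" for i j
    using M that by (simp add: scalar_prod_def atLeast0LessThan)
  have comp: "(\<Sum>j<n. ?Sc $$ (i,j) * v$j) = e * v$i" if "i<n" for i
  proof -
    have E: "(?Sc *\<^sub>v v) $ i = e * v$i" using v that by simp
    have d: "i < dim_row ?Sc" using M that by simp
    have "(?Sc *\<^sub>v v) $ i = row ?Sc i \<bullet> v" by (rule index_mult_mat_vec[OF d])
    also have "\<dots> = (\<Sum>j<n. ?Sc $$ (i,j) * v$j)"
      using v(1) that S M by (simp add: scalar_prod_def atLeast0LessThan del: index_map_mat, intro sum.cong refl, auto)
    finally have "(?Sc *\<^sub>v v) $ i = (\<Sum>j<n. ?Sc $$ (i,j) * v$j)" .
    then show ?thesis using E by simp
  qed
  define w where "w k = (\<Sum>j<n. complex_of_real (M$$(k,j)) * v$j)" for k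
  have cw: "cnj (w k) = (\<Sum>j<n. complex_of_real (M$$(k,j)) * cnj (v$j))" for k
    unfolding w_def by simp
  have "(\<Sum>i<n. cnj (v$i) * (\<Sum>j<n. ?Sc $$ (i,j) * v$j))
      = (\<Sum>i<n. \<Sum>j<n. \<Sum>k<n. (complex_of_real (M$$(k,i)) * cnj (v$i)) * (complex_of_real (M$$(k,j)) * v$j))"
    by (intro sum.cong refl, simp add: Sij sum_distrib_left sum_distrib_right mult_ac)
  also have "\<dots> = (\<Sum>k<n. \<Sum>i<n. \<Sum>j<n. (complex_of_real (M$$(k,i)) * cnj (v$i)) * (complex_of_real (M$$(k,j)) * v$j))"
    by (subst sum.swap, subst (2) sum.swap, simp)
  also have "\<dots> = (\<Sum>k<n. cnj (w k) * w k)"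
    by (simp add: cw w_def sum_product)
  also have "\<dots> = complex_of_real (\<Sum>k<n. (cmod (w k))^2)"
    unfolding of_real_sum by (intro sum.cong refl, subst complex_norm_square, simp add: mult.commute)
  finally have L: "(\<Sum>i<n. cnj (v$i) * (\<Sum>j<n. ?Sc $$ (i,j) * v$j)) = complex_of_real (\<Sum>k<n. (cmod (w k))^2)" .
  have "(\<Sum>i<n. cnj (v$i) * (\<Sum>j<n. ?Sc $$ (i,j) * v$j)) = (\<Sum>i<n. e * (cnj (v$i) * v$i))"
    by (intro sum.cong refl, simp add: comp)
  also have "\<dots> = e * complex_of_real (\<Sum>i<n. (cmod (v$i))^2)"
    unfolding of_real_sum sum_distrib_left by (intro sum.cong refl, subst complex_norm_square, simp add: mult.commute)
  finally have R: "(\<Sum>i<n. cnj (v$i) * (\<Sum>j<n. ?Sc $$ (i,j) * v$j)) = e * complex_of_real (\<Sum>i<n. (cmod (v$i))^2)" .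
  obtain i where i: "i < n" "v$i \<noteq> 0" using v(1,2) by (metis vec_eq_iff carrier_vecD index_zero_vec(1) index_zero_vec(2))
  have Vpos: "(\<Sum>i<n. (cmod (v$i))^2) > 0"
  proof -
    have "(cmod (v$i))^2 > 0" using i by simp
    moreover have "(cmod (v$i))^2 \<le> (\<Sum>i<n. (cmod (v$i))^2)"
      by (rule member_le_sum, insert i, auto)
    ultimately show ?thesis by linarith
  qed
  define W where "W = (\<Sum>k<n. (cmod (w k))^2)"
  define V where "V = (\<Sum>i<n. (cmod (v$i))^2)"
  have eq: "e * complex_of_real V = complex_of_real W" using L R unfolding V_def W_def by simp
  have "e = complex_of_real (W / V)" using eq Vpos unfolding V_def[symmetric]
    by (simp add: field_simps)
  moreover have "W / V \<ge> 0" unfolding W_def V_def by (intro divide_nonneg_nonneg sum_nonneg, auto)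
  ultimately show ?thesis by simp
qed

definition mtr :: "nat \<Rightarrow> 'a::comm_ring_1 mat \<Rightarrow> 'a" where
  "mtr n X = (\<Sum>i<n. X $$ (i,i))"

lemma mtr_comm:
  fixes X Y :: "'a::comm_ring_1 mat"
  assumes "X \<in> carrier_mat n n" "Y \<in> carrier_mat n n"
  shows "mtr n (X * Y) = mtr n (Y * X)"
proof -
  have "mtr n (X * Y) = (\<Sum>i<n. \<Sum>k<n. X$$(i,k) * Y$$(k,i))"
    unfolding mtr_def using assms by (intro sum.cong refl, simp add: scalar_prod_def atLeast0LessThan)
  also have "\<dots> = (\<Sum>k<n. \<Sum>i<n. Y$$(k,i) * X$$(i,k))"
    by (subst sum.swap, simp add: mult.commute)
  also have "\<dots> = mtr n (Y * X)"
    unfolding mtr_def using assms by (intro sum.cong refl, simp add: scalar_prod_def atLeast0LessThan)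
  finally show ?thesis .
qed

lemma trace_norm_zero_iff:
  fixes M :: "real mat"
  assumes M: "M \<in> carrier_mat n n"
  shows "trace_norm M = 0 \<longleftrightarrow> M = 0\<^sub>m n n"
proof -
  let ?S = "transpose_mat M * M"
  let ?Sc = "map_mat complex_of_real ?S"
  let ?p = "char_poly ?S"
  have S: "?S \<in> carrier_mat n n" using M by auto
  have Sc: "?Sc \<in> carrier_mat n n" using M by auto
  have pnz: "?p \<noteq> 0" using degree_monic_char_poly[OF S] by auto
  have cp: "char_poly ?Sc = map_poly complex_of_real ?p"
    by (rule of_real_hom.char_poly_hom[OF S])
  have croot: "poly (char_poly ?Sc) (complex_of_real x) = complex_of_real (poly ?p x)" for x
    unfolding cp by (simp add: of_real_hom.poly_map_poly)
  have rnn: "x \<ge> 0" if "poly ?p x = 0" for x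
  proof -
    have "eigenvalue ?Sc (complex_of_real x)"
      using croot[of x] that eigenvalue_root_char_poly[OF Sc] by simp
    from eig_real_nonneg[OF M this] show ?thesis by simp
  qed
  have R: "set_mset (proots ?p) = {x. poly ?p x = 0}" by (rule set_count_proots[OF pnz])
  show ?thesis
  proof
    assume tn: "trace_norm M = 0"
    have z: "x = 0" if "poly ?p x = 0" for x
    proof -
      have "sqrt x = 0"
        by (rule sum_mset_nonneg_zero[of "proots ?p" sqrt], insert tn rnn R that,
            auto simp: trace_norm_def)
      then show ?thesis by simp
    qed
    obtain es where es: "char_poly ?Sc = (\<Prod>a\<leftarrow>es. [:- a, 1:])" "length es = n"
      using char_poly_factorized[OF Sc] by blast
    have es0: "e = 0" if "e \<in> set es" for e
    proof -
      have "poly (char_poly ?Sc) e = 0" unfolding es(1) poly_prod_list prod_list_zero_iff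
        using that by auto
      then have ev: "eigenvalue ?Sc e" using eigenvalue_root_char_poly[OF Sc] by simp
      from eig_real_nonneg[OF M ev] have e: "e = complex_of_real (Re e)" by simp
      have "complex_of_real (poly ?p (Re e)) = 0" using croot[of "Re e"] e \<open>poly (char_poly ?Sc) e = 0\<close> by simp
      then have "Re e = 0" using z by simp
      then show ?thesis using e by simp
    qed
    obtain B P Q where sd: "schur_decomposition ?Sc es = (B,P,Q)" by (cases "schur_decomposition ?Sc es") auto
    from schur_decomposition[OF Sc es(1) sd]
    have sim: "similar_mat_wit ?Sc B P Q" and dg: "diag_mat B = es" by auto
    from sim Sc have BPQ: "B \<in> carrier_mat n n" "P \<in> carrier_mat n n" "Q \<in> carrier_mat n n"
      "Q * P = 1\<^sub>m n" "?Sc = P * B * Q"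
      unfolding similar_mat_wit_def Let_def by auto
    have "mtr n ?Sc = mtr n (P * (B * Q))" using BPQ by (simp add: assoc_mult_mat[of P n n B n Q n])
    also have "\<dots> = mtr n ((B * Q) * P)" using BPQ by (intro mtr_comm) auto
    also have "\<dots> = mtr n B" using BPQ by (simp add: assoc_mult_mat[of B n n Q n P n])
    also have "\<dots> = 0"
    proof -
      have "B $$ (i,i) = 0" if "i < n" for i
      proof -
        have "B $$ (i,i) = diag_mat B ! i" using that BPQ by (simp add: diag_mat_def)
        also have "\<dots> \<in> set es" using dg es(2) that by auto
        finally show ?thesis using es0 by blast
      qed
      then show ?thesis unfolding mtr_def by simp
    qed
    finally have "mtr n ?Sc = 0" .
    moreover have "mtr n ?Sc = complex_of_real (\<Sum>i<n. \<Sum>k<n. (M$$(k,i))^2)"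
      unfolding mtr_def of_real_sum using M
      by (intro sum.cong refl, simp add: scalar_prod_def atLeast0LessThan power2_eq_square)
    ultimately have sq: "(\<Sum>i<n. \<Sum>k<n. (M$$(k,i))^2) = 0" by (metis of_real_eq_0_iff)
    have "M$$(k,i) = 0" if "k<n" "i<n" for k i
    proof -
      have "(\<Sum>k<n. (M$$(k,i))^2) = 0"
      proof -
        have "\<forall>x\<in>{..<n}. (\<Sum>k<n. (M$$(k,x))^2) = 0"
          using sq sum_nonneg_eq_0_iff[of "{..<n}" "\<lambda>i. \<Sum>k<n. (M$$(k,i))^2"]
          by (simp add: sum_nonneg)
        then show ?thesis using that by auto
      qed
      then show ?thesis using sum_nonneg_eq_0_iff[of "{..<n}" "\<lambda>k. (M$$(k,i))^2"] that by auto
    qed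
    then show "M = 0\<^sub>m n n" using M by (intro eq_matI) auto
  next
    assume M0: "M = 0\<^sub>m n n"
    have z: "x = 0" if "poly ?p x = 0" for x
    proof -
      have "eigenvalue ?S x" using that eigenvalue_root_char_poly[OF S] by simp
      then obtain v where v: "v \<in> carrier_vec n" "v \<noteq> 0\<^sub>v n" "?S *\<^sub>v v = x \<cdot>\<^sub>v v"
        using S unfolding eigenvalue_def eigenvector_def by auto
      have "?S = 0\<^sub>m n n" using M0 by simp
      moreover have "0\<^sub>m n n *\<^sub>v v = 0\<^sub>v n" using v(1) by (intro eq_vecI) (auto simp: scalar_prod_def)
      ultimately have "x \<cdot>\<^sub>v v = 0\<^sub>v n" using v by simp
      moreover obtain i where i: "i < n" "v$i \<noteq> 0" using v(1,2) by (metis vec_eq_iff carrier_vecD index_zero_vec(1) index_zero_vec(2))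
      ultimately have "x * v$i = 0" using v(1) by (metis index_smult_vec(1) index_zero_vec(1) carrier_vecD)
      then show ?thesis using i by simp
    qed
    have "image_mset sqrt (proots ?p) = image_mset (\<lambda>_. 0) (proots ?p)"
      by (rule image_mset_cong, insert z R, auto)
    then show "trace_norm M = 0" unfolding trace_norm_def by simp
  qed
qed



lemma cpsd_diag_dom:
  fixes E Q P :: "real mat"
  assumes Esym: "\<forall>i<m. \<forall>j<m. E$$(i,j) = E$$(j,i)"
  and Qas: "\<forall>i<m. \<forall>j<m. Q$$(j,i) = - Q$$(i,j)"
  and Pdef: "\<forall>i<m. \<forall>j<m. P$$(i,j) = (if i = j then c else 0) + E$$(i,j)"
  and c: "c \<ge> (\<Sum>i<m. \<Sum>j<m. \<bar>E$$(i,j)\<bar> + \<bar>Q$$(i,j)\<bar>)"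
  shows "cpsd m P Q"
  unfolding cpsd_def Let_def
proof (intro allI conjI)
  fix v :: "nat \<Rightarrow> complex"
  define H where "H i j = complex_of_real (P$$(i,j)) + \<i> * complex_of_real (Q$$(i,j))" for i j
  define q where "q = (\<Sum>i<m. \<Sum>j<m. cnj (v i) * H i j * v j)"
  have qd: "(\<Sum>i<m. \<Sum>j<m. cnj (v i) * (complex_of_real (P $$ (i,j)) + \<i> * complex_of_real (Q $$ (i,j))) * v j) = q"
    unfolding q_def H_def ..
  have Hc: "cnj (H i j) = H j i" if "i<m" "j<m" for i j
  proof -
    have p1: "P$$(j,i) = (if j = i then c else 0) + E$$(j,i)" using Pdef that by blast
    have p2: "P$$(i,j) = (if i = j then c else 0) + E$$(i,j)" using Pdef that by blast
    have p3: "E$$(j,i) = E$$(i,j)" using Esym that by blast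
    have "P$$(j,i) = P$$(i,j)" unfolding p1 p2 p3 by simp
    moreover have "Q$$(j,i) = - Q$$(i,j)" using Qas that by blast
    ultimately show ?thesis unfolding H_def by (simp add: complex_eq_iff)
  qed
  have "cnj q = (\<Sum>i<m. \<Sum>j<m. v i * cnj (H i j) * cnj (v j))" unfolding q_def by simp
  also have "\<dots> = (\<Sum>i<m. \<Sum>j<m. cnj (v j) * H j i * v i)"
    by (intro sum.cong refl) (simp add: Hc mult_ac)
  also have "\<dots> = q" unfolding q_def by (subst sum.swap) simp
  finally have cq: "cnj q = q" .
  have "Im (cnj q) = Im q" using cq by (rule arg_cong)
  then have "Im q = 0" by (metis cnj.simps(2) neg_equal_zero)
  then show "Im (\<Sum>i<m. \<Sum>j<m. cnj (v i) * (complex_of_real (P $$ (i,j)) + \<i> * complex_of_real (Q $$ (i,j))) * v j) = 0"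
    unfolding qd .
  define V where "V = (\<Sum>i<m. (cmod (v i))^2)"
  define S where "S = (\<Sum>i<m. \<Sum>j<m. \<bar>E$$(i,j)\<bar> + \<bar>Q$$(i,j)\<bar>)"
  have sqV: "(cmod (v i))^2 \<le> V" if "i<m" for i
    unfolding V_def by (rule member_le_sum, insert that, auto)
  have bnd: "cmod (v i) * cmod (v j) \<le> V" if "i<m" "j<m" for i j
  proof -
    have "0 \<le> (cmod (v i) - cmod (v j))^2" by simp
    then have "2 * (cmod (v i) * cmod (v j)) \<le> (cmod (v i))^2 + (cmod (v j))^2"
      by (simp add: power2_eq_square algebra_simps)
    then show ?thesis using sqV[OF that(1)] sqV[OF that(2)] by linarith
  qed
  have trm: "Re (cnj (v i) * H i j * v j) \<ge> (if i = j then c * (cmod (v i))^2 else 0) - (\<bar>E$$(i,j)\<bar> + \<bar>Q$$(i,j)\<bar>) * V"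
    if "i<m" "j<m" for i j
  proof -
    define G where "G = complex_of_real (E$$(i,j)) + \<i> * complex_of_real (Q$$(i,j))"
    have HG: "H i j = complex_of_real (if i = j then c else 0) + G"
    proof -
      have "P$$(i,j) = (if i = j then c else 0) + E$$(i,j)" using Pdef that by blast
      then show ?thesis unfolding H_def G_def by simp
    qed
    have sp: "cnj (v i) * H i j * v j = complex_of_real (if i = j then c else 0) * (cnj (v i) * v j) + cnj (v i) * G * v j"
      unfolding HG by (simp add: algebra_simps)
    have r1: "Re (complex_of_real (if i = j then c else 0) * (cnj (v i) * v j)) = (if i = j then c * (cmod (v i))^2 else 0)"
      by (cases "i = j") (simp_all add: complex_mult_cnj cmod_power2 mult.commute)
    have cG: "cmod G \<le> \<bar>E$$(i,j)\<bar> + \<bar>Q$$(i,j)\<bar>"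
      unfolding G_def using norm_triangle_ineq[of "complex_of_real (E$$(i,j))" "\<i> * complex_of_real (Q$$(i,j))"]
      by (simp add: norm_mult)
    have "cmod (cnj (v i) * G * v j) = cmod G * (cmod (v i) * cmod (v j))"
      by (simp add: norm_mult)
    also have "\<dots> \<le> (\<bar>E$$(i,j)\<bar> + \<bar>Q$$(i,j)\<bar>) * V"
      by (rule mult_mono[OF cG bnd[OF that]], auto)
    finally have "Re (cnj (v i) * G * v j) \<ge> - ((\<bar>E$$(i,j)\<bar> + \<bar>Q$$(i,j)\<bar>) * V)"
      using abs_Re_le_cmod[of "cnj (v i) * G * v j"] by linarith
    then show ?thesis unfolding sp using r1 by simp
  qed
  have "Re q = (\<Sum>i<m. \<Sum>j<m. Re (cnj (v i) * H i j * v j))" unfolding q_def by (simp add: Re_sum)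
  also have "\<dots> \<ge> (\<Sum>i<m. \<Sum>j<m. (if i = j then c * (cmod (v i))^2 else 0) - (\<bar>E$$(i,j)\<bar> + \<bar>Q$$(i,j)\<bar>) * V)"
    by (intro sum_mono trm) auto
  also have "(\<Sum>i<m. \<Sum>j<m. (if i = j then c * (cmod (v i))^2 else 0) - (\<bar>E$$(i,j)\<bar> + \<bar>Q$$(i,j)\<bar>) * V)
      = (\<Sum>i<m. \<Sum>j<m. (if i = j then c * (cmod (v i))^2 else 0)) - S * V"
    unfolding S_def by (simp only: sum_subtractf sum_distrib_right)
  finally have "Re q \<ge> (\<Sum>i<m. \<Sum>j<m. (if i = j then c * (cmod (v i))^2 else 0)) - S * V" .
  moreover have "(\<Sum>i<m. \<Sum>j<m. (if i = j then c * (cmod (v i))^2 else 0)) = c * V"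
    unfolding V_def by (simp add: sum_distrib_left)
  moreover have "V \<ge> 0" unfolding V_def by (auto intro: sum_nonneg)
  moreover have "c \<ge> S" using c unfolding S_def .
  ultimately have "Re q \<ge> (c - S) * V" by (simp add: algebra_simps)
  moreover have "(c - S) * V \<ge> 0" using \<open>V \<ge> 0\<close> \<open>c \<ge> S\<close> by simp
  ultimately show "0 \<le> Re (\<Sum>i<m. \<Sum>j<m. cnj (v i) * (complex_of_real (P $$ (i,j)) + \<i> * complex_of_real (Q $$ (i,j))) * v j)"
    unfolding qd by linarith
qed

lemma cpsd_rpsd: assumes "cpsd m P Q" shows "rpsd m P"
  unfolding rpsd_def
proof
  fix x :: "nat \<Rightarrow> real"
  have "0 \<le> Re (\<Sum>i<m. \<Sum>j<m. cnj (complex_of_real (x i)) * (complex_of_real (P $$ (i,j)) + \<i> * complex_of_real (Q $$ (i,j))) * complex_of_real (x j))"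
    using conjunct2[OF spec[OF assms[unfolded cpsd_def Let_def], of "\<lambda>i. complex_of_real (x i)"]] .
  then show "0 \<le> (\<Sum>i<m. \<Sum>j<m. x i * P $$ (i, j) * x j)" by (simp add: Re_sum algebra_simps)
qed

lemma Delta_carrier[simp]: "Delta n \<in> carrier_mat (2*n) (2*n)" unfolding Delta_def by simp

lemma Delta_antisym: "i < 2*n \<Longrightarrow> j < 2*n \<Longrightarrow> Delta n $$ (j,i) = - Delta n $$ (i,j)"
proof -
  assume a: "i < 2*n" "j < 2*n"
  have x: "Delta n $$ (j,i) = (if even j \<and> i = j + 1 then 1 else if odd j \<and> i + 1 = j then -1 else 0)"
      "Delta n $$ (i,j) = (if even i \<and> j = i + 1 then 1 else if odd i \<and> j + 1 = i then -1 else 0)"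
    using a by (simp_all add: Delta_def)
  show ?thesis unfolding x by (cases "j = i+1"; cases "i = j+1"; simp)
qed

lemma congr_antisym:
  fixes T D :: "real mat"
  assumes T: "T \<in> carrier_mat m m" and D: "D \<in> carrier_mat m m"
  and Da: "\<forall>i<m. \<forall>j<m. D$$(j,i) = - D$$(i,j)"
  and ij: "i < m" "j < m"
  shows "(T * D * transpose_mat T)$$(j,i) = - (T * D * transpose_mat T)$$(i,j)"
proof -
  have e: "(T * D * transpose_mat T)$$(i,j) = (\<Sum>k<m. \<Sum>l<m. T$$(i,k) * D$$(k,l) * T$$(j,l))" if "i<m" "j<m" for i j
    using T D that by (simp add: scalar_prod_def atLeast0LessThan sum_distrib_left mult.assoc)
  have "(T * D * transpose_mat T)$$(j,i) = (\<Sum>k<m. \<Sum>l<m. T$$(j,k) * D$$(k,l) * T$$(i,l))" using e ij by simp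
  also have "\<dots> = (\<Sum>l<m. \<Sum>k<m. T$$(j,k) * D$$(k,l) * T$$(i,l))" by (rule sum.swap)
  also have "\<dots> = (\<Sum>l<m. \<Sum>k<m. - (T$$(i,l) * D$$(l,k) * T$$(j,k)))"
  proof (intro sum.cong refl)
    fix l k assume "l \<in> {..<m}" "k \<in> {..<m}"
    then have "D$$(k,l) = - D$$(l,k)" using Da by blast
    then show "T$$(j,k) * D$$(k,l) * T$$(i,l) = - (T$$(i,l) * D$$(l,k) * T$$(j,k))" by simp
  qed
  also have "\<dots> = - (T * D * transpose_mat T)$$(i,j)" using e ij by (simp add: sum_negf)
  finally show ?thesis .
qed

lemma gc_mk:
  fixes T E :: "real mat"
  assumes T: "T \<in> carrier_mat (2*n) (2*n)" and E: "E \<in> carrier_mat (2*n) (2*n)"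
  and Es: "\<forall>i<2*n. \<forall>j<2*n. E$$(i,j) = E$$(j,i)"
  and d: "d \<in> carrier_vec (2*n)"
  and c: "c \<ge> (\<Sum>i<2*n. \<Sum>j<2*n. \<bar>E$$(i,j)\<bar> + \<bar>(Delta n - T * Delta n * transpose_mat T)$$(i,j)\<bar>)"
  shows "gaussian_channel n T (c \<cdot>\<^sub>m 1\<^sub>m (2*n) + E) d"
proof -
  let ?N = "c \<cdot>\<^sub>m 1\<^sub>m (2*n) + E"
  let ?Q = "Delta n - T * Delta n * transpose_mat T"
  have N: "?N \<in> carrier_mat (2*n) (2*n)" using E by simp
  have Nsym: "?N = transpose_mat ?N"
  proof (rule eq_matI)
    fix i j assume ij: "i < dim_row (transpose_mat ?N)" "j < dim_col (transpose_mat ?N)"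
    then have ij': "i < 2*n" "j < 2*n" using E by auto
    have "E$$(i,j) = E$$(j,i)" using Es ij' by blast
    then show "?N $$ (i,j) = transpose_mat ?N $$ (i,j)" using ij' E by simp
  qed (use E in auto)
  have Qa: "\<forall>i<2*n. \<forall>j<2*n. ?Q$$(j,i) = - ?Q$$(i,j)"
  proof (intro allI impI)
    fix i j assume ij: "i < 2*n" "j < 2*n"
    have "(T * Delta n * transpose_mat T)$$(j,i) = - (T * Delta n * transpose_mat T)$$(i,j)"
      by (rule congr_antisym[OF T Delta_carrier _ ij]) (auto intro: Delta_antisym)
    then show "?Q$$(j,i) = - ?Q$$(i,j)" using ij T Delta_antisym[OF ij] by simp
  qed
  have cp: "cpsd (2*n) ?N ?Q"
  proof (rule cpsd_diag_dom[OF Es Qa _ c], intro allI impI)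
    fix i j assume "i < 2*n" "j < 2*n"
    then show "?N $$ (i,j) = (if i = j then c else 0) + E$$(i,j)" using E by simp
  qed
  show ?thesis unfolding gaussian_channel_def
    by (intro conjI T N d Nsym cpsd_rpsd[OF cp] cp)
qed



lemma sum_split_2n: "(\<Sum>i<2*n. f i) = (\<Sum>k<n. f (2*k)) + (\<Sum>k<n. f (2*k+1))" for f :: "nat \<Rightarrow> 'a::comm_monoid_add"
  by (induction n) (simp_all add: algebra_simps)

lemma blk_eo_zero: "blk_eo n T = 0\<^sub>m n n \<longleftrightarrow> (\<forall>k<n. \<forall>l<n. T$$(2*k+1,2*l) = 0)"
  unfolding blk_eo_def by (auto simp: eq_matI mat_eq_iff)
lemma blk_oe_zero: "blk_oe n T = 0\<^sub>m n n \<longleftrightarrow> (\<forall>k<n. \<forall>l<n. T$$(2*k,2*l+1) = 0)"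
  unfolding blk_oe_def by (auto simp: eq_matI mat_eq_iff)
lemma blk_ee_zero: "blk_ee n T = 0\<^sub>m n n \<longleftrightarrow> (\<forall>k<n. \<forall>l<n. T$$(2*k+1,2*l+1) = 0)"
  unfolding blk_ee_def by (auto simp: eq_matI mat_eq_iff)
lemma blk_carrier[simp]: "blk_eo n T \<in> carrier_mat n n" "blk_oe n T \<in> carrier_mat n n" "blk_ee n T \<in> carrier_mat n n"
  unfolding blk_eo_def blk_oe_def blk_ee_def by auto

lemma l1_zero: "l1_norm (vec_e n d) = 0 \<longleftrightarrow> (\<forall>k<n. d$(2*k+1) = 0)"
proof -
  have "l1_norm (vec_e n d) = (\<Sum>k<n. \<bar>d$(2*k+1)\<bar>)" unfolding l1_norm_def vec_e_def by simp
  moreover have "(\<Sum>k<n. \<bar>d$(2*k+1)\<bar>) = 0 \<longleftrightarrow> (\<forall>k<n. d$(2*k+1) = 0)"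
    by (subst sum_nonneg_eq_0_iff) auto
  ultimately show ?thesis by simp
qed

lemma mult_sq_carrier[simp]: "X \<in> carrier_mat m m \<Longrightarrow> Y \<in> carrier_mat m m \<Longrightarrow> X * Y \<in> carrier_mat m m"
  by (rule mult_carrier_mat)

lemma Sigma_carrier[simp]: "Sigma n \<in> carrier_mat (2*n) (2*n)" unfolding Sigma_def by simp

lemma Sigma_left: assumes X: "X \<in> carrier_mat (2*n) (2*n)" and b: "b < 2*n" and y: "y < 2*n"
  shows "(Sigma n * X)$$(b,y) = (if even b then 1 else -1) * X$$(b,y)"
proof -
  have "(Sigma n * X)$$(b,y) = (\<Sum>k<2*n. (if b = k then (if even b then 1 else -1) else 0) * X$$(k,y))"
    using X b y by (simp add: scalar_prod_def atLeast0LessThan Sigma_def)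
  also have "\<dots> = (if even b then 1 else -1) * X$$(b,y)"
    using b by (simp add: if_distrib[of "\<lambda>z. z * _"] sum.delta cong: if_cong)
  finally show ?thesis .
qed

lemma Sigma_right: assumes X: "X \<in> carrier_mat (2*n) (2*n)" and b: "b < 2*n" and y: "y < 2*n"
  shows "(X * Sigma n)$$(b,y) = X$$(b,y) * (if even y then 1 else -1)"
proof -
  have "(X * Sigma n)$$(b,y) = (\<Sum>k<2*n. X$$(b,k) * (if k = y then (if even k then 1 else -1) else 0))"
    using X b y by (simp add: scalar_prod_def atLeast0LessThan Sigma_def)
  also have "\<dots> = X$$(b,y) * (if even y then 1 else -1)"
    using y by (simp add: if_distrib[of "\<lambda>z. _ * z"] sum.delta' cong: if_cong)
  finally show ?thesis .
qed

definition PP :: "nat \<Rightarrow> real mat \<Rightarrow> real mat" where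
  "PP n Om = Sigma n * transpose_mat Om * Sigma n"

lemma PP_carrier: "Om \<in> carrier_mat (2*n) (2*n) \<Longrightarrow> PP n Om \<in> carrier_mat (2*n) (2*n)"
  unfolding PP_def by (intro mult_sq_carrier) auto

lemma PP_entry: assumes Om: "Om \<in> carrier_mat (2*n) (2*n)" and b: "b < 2*n" and y: "y < 2*n"
  shows "PP n Om $$ (b,y) = (if even b then 1 else -1) * Om$$(y,b) * (if even y then 1 else -1)"
proof -
  have "PP n Om $$ (b,y) = (Sigma n * transpose_mat Om) $$ (b,y) * (if even y then 1 else -1)"
    unfolding PP_def by (rule Sigma_right, insert Om b y, auto intro!: mult_sq_carrier)
  also have "(Sigma n * transpose_mat Om) $$ (b,y) = (if even b then 1 else -1) * Om$$(y,b)"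
    using Sigma_left[of "transpose_mat Om" n b y] Om b y by simp
  finally show ?thesis .
qed

lemma PP_zero_iff: assumes Om: "Om \<in> carrier_mat (2*n) (2*n)" and b: "b < 2*n" and y: "y < 2*n"
  shows "PP n Om $$ (b,y) = 0 \<longleftrightarrow> Om$$(y,b) = 0"
  using PP_entry[OF assms] by auto

lemma scT_eq: assumes A: "A \<in> carrier_mat (2*n) (2*n)" and Om: "Om \<in> carrier_mat (2*n) (2*n)"
  and T: "T \<in> carrier_mat (2*n) (2*n)"
  shows "sc_T n A Om T = A * (T * PP n Om)"
  unfolding sc_T_def PP_def using A Om T
  by (simp add: assoc_mult_mat[of _ "2*n" "2*n" _ "2*n" _ "2*n"] del: assoc_mult_mat)

lemma scT_add: assumes A: "A \<in> carrier_mat (2*n) (2*n)" and Om: "Om \<in> carrier_mat (2*n) (2*n)"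
  and T: "T \<in> carrier_mat (2*n) (2*n)" and T': "T' \<in> carrier_mat (2*n) (2*n)"
  shows "sc_T n A Om (T + T') = sc_T n A Om T + sc_T n A Om T'"
proof -
  have P: "PP n Om \<in> carrier_mat (2*n) (2*n)" using PP_carrier[OF Om] .
  have "sc_T n A Om (T + T') = A * ((T + T') * PP n Om)" using scT_eq[OF A Om] T T' by simp
  also have "\<dots> = A * (T * PP n Om + T' * PP n Om)" using T T' P by (simp add: add_mult_distrib_mat[of _ "2*n" "2*n" _ _ "2*n"])
  also have "\<dots> = A * (T * PP n Om) + A * (T' * PP n Om)" using T T' P A by (simp add: mult_add_distrib_mat[of _ "2*n" "2*n" _ "2*n"])
  also have "\<dots> = sc_T n A Om T + sc_T n A Om T'" using scT_eq[OF A Om] T T' by simp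
  finally show ?thesis .
qed

lemma orth_block:
  fixes Om :: "real mat"
  assumes Om: "Om \<in> carrier_mat (2*n) (2*n)" and O1: "Om * transpose_mat Om = 1\<^sub>m (2*n)"
  and z: "\<forall>j<n. \<forall>r<n. Om$$(2*j,2*r+1) = 0"
  shows "\<forall>j<n. \<forall>r<n. Om$$(2*j+1,2*r) = 0"
proof -
  have O2: "transpose_mat Om * Om = 1\<^sub>m (2*n)"
    by (rule mat_mult_left_right_inverse[OF Om _ O1], insert Om, auto)
  have row: "(\<Sum>a<2*n. (Om$$(i,a))^2) = 1" if "i < 2*n" for i
  proof -
    have "(Om * transpose_mat Om)$$(i,i) = 1" using O1 that by simp
    then show ?thesis using Om that by (simp add: scalar_prod_def atLeast0LessThan power2_eq_square)
  qed
  have col: "(\<Sum>a<2*n. (Om$$(a,i))^2) = 1" if "i < 2*n" for i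
  proof -
    have "(transpose_mat Om * Om)$$(i,i) = 1" using O2 that by simp
    then show ?thesis using Om that by (simp add: scalar_prod_def atLeast0LessThan power2_eq_square)
  qed
  have "(\<Sum>j<n. \<Sum>r<n. (Om$$(2*j,2*r))^2) = (\<Sum>j<n. \<Sum>a<2*n. (Om$$(2*j,a))^2)"
  proof (rule sum.cong[OF refl])
    fix j assume "j \<in> {..<n}"
    then show "(\<Sum>r<n. (Om$$(2*j,2*r))^2) = (\<Sum>a<2*n. (Om$$(2*j,a))^2)" using z by (simp add: sum_split_2n)
  qed
  also have "\<dots> = of_nat n" using row by simp
  finally have e1: "(\<Sum>j<n. \<Sum>r<n. (Om$$(2*j,2*r))^2) = real n" by simp
  have "(\<Sum>r<n. \<Sum>j<n. (Om$$(2*j,2*r))^2) + (\<Sum>r<n. \<Sum>j<n. (Om$$(2*j+1,2*r))^2)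
        = (\<Sum>r<n. \<Sum>a<2*n. (Om$$(a,2*r))^2)"
    by (simp add: sum_split_2n sum.distrib)
  also have "\<dots> = of_nat n" using col by simp
  finally have e2: "(\<Sum>r<n. \<Sum>j<n. (Om$$(2*j,2*r))^2) + (\<Sum>r<n. \<Sum>j<n. (Om$$(2*j+1,2*r))^2) = real n" by simp
  have "(\<Sum>r<n. \<Sum>j<n. (Om$$(2*j,2*r))^2) = (\<Sum>j<n. \<Sum>r<n. (Om$$(2*j,2*r))^2)" by (rule sum.swap)
  with e1 e2 have s0: "(\<Sum>r<n. \<Sum>j<n. (Om$$(2*j+1,2*r))^2) = 0" by simp
  show ?thesis
  proof (intro allI impI)
    fix j r assume jr: "j < n" "r < n"
    have "\<forall>r\<in>{..<n}. (\<Sum>j<n. (Om$$(2*j+1,2*r))^2) = 0"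
      using s0 sum_nonneg_eq_0_iff[of "{..<n}" "\<lambda>r. \<Sum>j<n. (Om$$(2*j+1,2*r))^2"]
      by (simp add: sum_nonneg)
    then have "(\<Sum>j<n. (Om$$(2*j+1,2*r))^2) = 0" using jr by simp
    then have "\<forall>j\<in>{..<n}. (Om$$(2*j+1,2*r))^2 = 0"
      using sum_nonneg_eq_0_iff[of "{..<n}" "\<lambda>j. (Om$$(2*j+1,2*r))^2"] by simp
    then show "Om$$(2*j+1,2*r) = 0" using jr by simp
  qed
qed



definition cc :: "nat \<Rightarrow> real mat \<Rightarrow> real mat \<Rightarrow> real" where
  "cc n T E = (\<Sum>i<2*n. \<Sum>j<2*n. \<bar>E$$(i,j)\<bar> + \<bar>(Delta n - T * Delta n * transpose_mat T)$$(i,j)\<bar>)"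

definition rT :: "nat \<Rightarrow> real mat \<Rightarrow> bool" where
  "rT n T \<longleftrightarrow> ((\<forall>k<n. \<forall>l<n. T $$ (2*k+1, 2*l) = 0 \<and> T $$ (2*k+1, 2*l+1) = 0) \<or>
      (\<forall>k<n. \<forall>l<n. T $$ (2*k, 2*l+1) = 0 \<and> T $$ (2*k+1, 2*l) = 0))"

lemma real_channel_alt: "real_channel n T N d \<longleftrightarrow>
     (\<forall>k<n. d $ (2*k+1) = 0) \<and> (\<forall>k<n. \<forall>l<n. N $$ (2*k, 2*l+1) = 0) \<and> rT n T"
  unfolding real_channel_def rT_def ..

lemma sc_facts: assumes "real_superchannel n A Om Y db"
  shows "A \<in> carrier_mat (2*n) (2*n)" "Om \<in> carrier_mat (2*n) (2*n)" "Y \<in> carrier_mat (2*n) (2*n)"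
    "db \<in> carrier_vec (2*n)" "Om * transpose_mat Om = 1\<^sub>m (2*n)"
  using assms unfolding real_superchannel_def gaussian_superchannel_def by auto

lemma out_real:
  assumes RS: "real_superchannel n A Om Y db"
  and T: "T \<in> carrier_mat (2*n) (2*n)" and E: "E \<in> carrier_mat (2*n) (2*n)"
  and Es: "\<forall>i<2*n. \<forall>j<2*n. E$$(i,j) = E$$(j,i)"
  and d: "d \<in> carrier_vec (2*n)"
  and c: "c \<ge> cc n T E"
  and r: "real_channel n T (c \<cdot>\<^sub>m 1\<^sub>m (2*n) + E) d"
  shows "real_channel n (sc_T n A Om T) (sc_N A Y (c \<cdot>\<^sub>m 1\<^sub>m (2*n) + E)) (sc_d A db d)"
proof -
  have "gaussian_channel n T (c \<cdot>\<^sub>m 1\<^sub>m (2*n) + E) d"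
    by (rule gc_mk[OF T E Es d], use c in \<open>simp add: cc_def\<close>)
  then show ?thesis using RS r unfolding real_superchannel_def by blast
qed

lemma neq_eo[simp]: "(2::nat)*k \<noteq> Suc (2*l)" "Suc (2*l) \<noteq> (2::nat)*k" by presburger+

lemma real_T_out:
  assumes RS: "real_superchannel n A Om Y db"
  and T: "T \<in> carrier_mat (2*n) (2*n)" and rt: "rT n T"
  shows "rT n (sc_T n A Om T)"
proof -
  let ?E = "0\<^sub>m (2*n) (2*n) :: real mat"
  let ?c = "cc n T ?E"
  have r: "real_channel n T (?c \<cdot>\<^sub>m 1\<^sub>m (2*n) + ?E) (0\<^sub>v (2*n))"
    unfolding real_channel_alt using rt by auto
  have "real_channel n (sc_T n A Om T) (sc_N A Y (?c \<cdot>\<^sub>m 1\<^sub>m (2*n) + ?E)) (sc_d A db (0\<^sub>v (2*n)))"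
    by (rule out_real[OF RS T _ _ _ _ r]) auto
  then show ?thesis unfolding real_channel_alt by blast
qed

lemma rT_eo: "rT n T \<Longrightarrow> k < n \<Longrightarrow> l < n \<Longrightarrow> T $$ (2*k+1, 2*l) = 0"
  unfolding rT_def by blast

lemma rT_oe_ee: "rT n T \<Longrightarrow> (\<forall>k<n. \<forall>l<n. T $$ (2*k, 2*l+1) = 0) \<or> (\<forall>k<n. \<forall>l<n. T $$ (2*k+1, 2*l+1) = 0)"
  unfolding rT_def by blast

lemma prod_entry:
  fixes A X P :: "real mat"
  assumes "A \<in> carrier_mat m m" "X \<in> carrier_mat m m" "P \<in> carrier_mat m m" "x < m" "y < m"
  shows "(A * (X * P))$$(x,y) = (\<Sum>a<m. A$$(x,a) * (\<Sum>b<m. X$$(a,b) * P$$(b,y)))"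
  using assms by (simp add: scalar_prod_def atLeast0LessThan)

lemma h1:
  assumes RS: "real_superchannel n A Om Y db"
  and T: "T \<in> carrier_mat (2*n) (2*n)"
  and z: "\<forall>k<n. \<forall>l<n. T$$(2*k+1,2*l) = 0"
  shows "\<forall>k<n. \<forall>l<n. sc_T n A Om T $$ (2*k+1,2*l) = 0"
proof -
  note F = sc_facts[OF RS]
  define T1 where "T1 = mat (2*n) (2*n) (\<lambda>(i,j). if even i then T$$(i,j) else 0)"
  define T2 where "T2 = mat (2*n) (2*n) (\<lambda>(i,j). if even i then 0 else T$$(i,j))"
  have C: "T1 \<in> carrier_mat (2*n) (2*n)" "T2 \<in> carrier_mat (2*n) (2*n)" unfolding T1_def T2_def by auto
  have TT: "T = T1 + T2" unfolding T1_def T2_def using T by (intro eq_matI) auto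
  have r1: "rT n T1" unfolding rT_def T1_def by auto
  have r2: "rT n T2" unfolding rT_def T2_def using z by auto
  have o1: "rT n (sc_T n A Om T1)" by (rule real_T_out[OF RS C(1) r1])
  have o2: "rT n (sc_T n A Om T2)" by (rule real_T_out[OF RS C(2) r2])
  have s: "sc_T n A Om T = sc_T n A Om T1 + sc_T n A Om T2"
    unfolding TT by (rule scT_add[OF F(1) F(2) C])
  have D: "sc_T n A Om T1 \<in> carrier_mat (2*n) (2*n)" "sc_T n A Om T2 \<in> carrier_mat (2*n) (2*n)"
    using scT_eq[OF F(1) F(2)] C F PP_carrier by auto
  show ?thesis
  proof (intro allI impI)
    fix k l assume kl: "k < n" "l < n"
    have "sc_T n A Om T $$ (2*k+1,2*l) = sc_T n A Om T1 $$ (2*k+1,2*l) + sc_T n A Om T2 $$ (2*k+1,2*l)"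
      unfolding s using D kl by simp
    then show "sc_T n A Om T $$ (2*k+1,2*l) = 0" using rT_eo[OF o1 kl] rT_eo[OF o2 kl] by simp
  qed
qed


lemma Er_entry:
  fixes A P :: "real mat"
  assumes A: "A \<in> carrier_mat m m" and P: "P \<in> carrier_mat m m" and p: "p < m" and q: "q < m"
  and x: "x < m" and y: "y < m"
  shows "(A * (mat m m (\<lambda>(i,j). if i = p \<and> j = q then 1 else 0) * P))$$(x,y) = A$$(x,p) * P$$(q,y)"
proof -
  let ?E = "mat m m (\<lambda>(i,j). if i = p \<and> j = q then 1 else 0) :: real mat"
  have inner: "(\<Sum>b<m. ?E$$(a,b) * P$$(b,y)) = (if a = p then P$$(q,y) else 0)" if "a < m" for a
  proof (cases "a = p")
    case True
    have "(\<Sum>b<m. ?E$$(a,b) * P$$(b,y)) = (\<Sum>b<m. (if b = q then P$$(q,y) else 0))"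
      using that True by (intro sum.cong refl) auto
    also have "\<dots> = P$$(q,y)" using q by simp
    finally show ?thesis using True by simp
  next
    case False
    then show ?thesis using that by simp
  qed
  have "(A * (?E * P))$$(x,y) = (\<Sum>a<m. A$$(x,a) * (\<Sum>b<m. ?E$$(a,b) * P$$(b,y)))"
    by (rule prod_entry[OF A _ P x y]) auto
  also have "\<dots> = (\<Sum>a<m. (if a = p then A$$(x,a) * P$$(q,y) else 0))"
    by (rule sum.cong[OF refl], subst inner, auto)
  also have "\<dots> = A$$(x,p) * P$$(q,y)" using p by simp
  finally show ?thesis .
qed

lemma h2:
  assumes RS: "real_superchannel n A Om Y db"
  and T: "T \<in> carrier_mat (2*n) (2*n)"
  and z: "(\<forall>k<n. \<forall>l<n. T$$(2*k,2*l+1) = 0) \<or> (\<forall>k<n. \<forall>l<n. T$$(2*k+1,2*l+1) = 0)"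
  shows "(\<forall>k<n. \<forall>l<n. sc_T n A Om T $$ (2*k,2*l+1) = 0) \<or> (\<forall>k<n. \<forall>l<n. sc_T n A Om T $$ (2*k+1,2*l+1) = 0)"
proof -
  note F = sc_facts[OF RS]
  let ?P = "PP n Om"
  have P: "?P \<in> carrier_mat (2*n) (2*n)" by (rule PP_carrier[OF F(2)])
  define R where "R = mat (2*n) (2*n) (\<lambda>(i,j). if odd i \<and> even j then 0 else T$$(i,j))"
  define Te where "Te = mat (2*n) (2*n) (\<lambda>(i,j). if odd i \<and> even j then T$$(i,j) else 0)"
  have C: "R \<in> carrier_mat (2*n) (2*n)" "Te \<in> carrier_mat (2*n) (2*n)" unfolding R_def Te_def by auto
  have TT: "T = R + Te" unfolding R_def Te_def using T by (intro eq_matI) auto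
  have rR: "rT n R" unfolding rT_def R_def using z by auto
  have oR: "rT n (sc_T n A Om R)" by (rule real_T_out[OF RS C(1) rR])
  have s: "sc_T n A Om T = sc_T n A Om R + sc_T n A Om Te"
    unfolding TT by (rule scT_add[OF F(1) F(2) C])
  have D: "sc_T n A Om R \<in> carrier_mat (2*n) (2*n)" "sc_T n A Om Te \<in> carrier_mat (2*n) (2*n)"
    using scT_eq[OF F(1) F(2)] C F P by auto
  show ?thesis
  proof (cases "\<forall>k<n. \<forall>j<2*n. A$$(2*k+1,j) = 0")
    case True
    have "sc_T n A Om T $$ (2*k+1,2*l+1) = 0" if kl: "k < n" "l < n" for k l
    proof -
      have "sc_T n A Om T $$ (2*k+1,2*l+1) = (\<Sum>a<2*n. A$$(2*k+1,a) * (\<Sum>b<2*n. T$$(a,b) * ?P$$(b,2*l+1)))"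
        unfolding scT_eq[OF F(1) F(2) T] by (rule prod_entry[OF F(1) T P], use kl in auto)
      also have "\<dots> = 0" using True kl by simp
      finally show ?thesis .
    qed
    then show ?thesis by blast
  next
    case False
    then obtain k0 p where k0: "k0 < n" "p < 2*n" "A$$(2*k0+1,p) \<noteq> 0" by blast
    have P0: "?P $$ (2*r+1, 2*j) = 0" if rj: "r < n" "j < n" for r j
    proof -
      define Er where "Er = mat (2*n) (2*n) (\<lambda>(i,j). if i = p \<and> j = 2*r+1 then 1 else (0::real))"
      have Ec: "Er \<in> carrier_mat (2*n) (2*n)" unfolding Er_def by auto
      have rE: "rT n Er"
      proof (cases "even p")
        case True
        then show ?thesis unfolding rT_def Er_def by auto
      next
        case False
        then show ?thesis unfolding rT_def Er_def by auto
      qed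
      have oE: "rT n (sc_T n A Om Er)" by (rule real_T_out[OF RS Ec rE])
      have "sc_T n A Om Er $$ (2*k0+1, 2*j) = 0" by (rule rT_eo[OF oE k0(1) rj(2)])
      moreover have "sc_T n A Om Er $$ (2*k0+1, 2*j) = A$$(2*k0+1,p) * ?P$$(2*r+1,2*j)"
        unfolding scT_eq[OF F(1) F(2) Ec] unfolding Er_def
        by (rule Er_entry[OF F(1) P k0(2)], use rj k0 in auto)
      ultimately show ?thesis using k0(3) by simp
    qed
    have O0: "\<forall>j<n. \<forall>r<n. Om$$(2*j,2*r+1) = 0"
    proof (intro allI impI)
      fix j r assume jr: "j < n" "r < n"
      show "Om$$(2*j,2*r+1) = 0" using P0[OF jr(2) jr(1)] PP_zero_iff[OF F(2), of "2*r+1" "2*j"] jr by simp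
    qed
    have O1: "\<forall>j<n. \<forall>r<n. Om$$(2*j+1,2*r) = 0" by (rule orth_block[OF F(2) F(5) O0])
    have P1: "?P $$ (2*r, 2*j+1) = 0" if jr: "r < n" "j < n" for r j
      using O1 PP_zero_iff[OF F(2), of "2*r" "2*j+1"] jr by simp
    have TeP: "(\<Sum>b<2*n. Te$$(a,b) * ?P$$(b,2*l+1)) = 0" if al: "a < 2*n" "l < n" for a l
    proof -
      have "(\<Sum>b<2*n. Te$$(a,b) * ?P$$(b,2*l+1)) = (\<Sum>r<n. Te$$(a,2*r) * ?P$$(2*r,2*l+1)) + (\<Sum>r<n. Te$$(a,2*r+1) * ?P$$(2*r+1,2*l+1))"
        by (rule sum_split_2n)
      also have "\<dots> = 0" using P1 al by (simp add: Te_def)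
      finally show ?thesis .
    qed
    have Te0: "sc_T n A Om Te $$ (x,2*l+1) = 0" if xl: "x < 2*n" "l < n" for x l
    proof -
      have "sc_T n A Om Te $$ (x,2*l+1) = (\<Sum>a<2*n. A$$(x,a) * (\<Sum>b<2*n. Te$$(a,b) * ?P$$(b,2*l+1)))"
        unfolding scT_eq[OF F(1) F(2) C(2)] by (rule prod_entry[OF F(1) C(2) P], use xl in auto)
      also have "\<dots> = 0" using TeP xl by simp
      finally show ?thesis .
    qed
    have sp: "sc_T n A Om T $$ (x,2*l+1) = sc_T n A Om R $$ (x,2*l+1)" if xl: "x < 2*n" "l < n" for x l
      unfolding s using D xl Te0[OF xl] by simp
    from rT_oe_ee[OF oR] show ?thesis
    proof
      assume a: "\<forall>k<n. \<forall>l<n. sc_T n A Om R $$ (2*k, 2*l+1) = 0"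
      have "\<forall>k<n. \<forall>l<n. sc_T n A Om T $$ (2*k, 2*l+1) = 0"
        using a sp by simp
      then show ?thesis by blast
    next
      assume a: "\<forall>k<n. \<forall>l<n. sc_T n A Om R $$ (2*k+1, 2*l+1) = 0"
      have "\<forall>k<n. \<forall>l<n. sc_T n A Om T $$ (2*k+1, 2*l+1) = 0"
        using a sp by simp
      then show ?thesis by blast
    qed
  qed
qed


lemma h4:
  assumes RS: "real_superchannel n A Om Y db"
  and d: "d \<in> carrier_vec (2*n)" and z: "\<forall>k<n. d$(2*k+1) = 0"
  shows "\<forall>k<n. (sc_d A db d)$(2*k+1) = 0"
proof -
  let ?Z = "0\<^sub>m (2*n) (2*n) :: real mat"
  let ?c = "cc n ?Z ?Z"
  have r: "real_channel n ?Z (?c \<cdot>\<^sub>m 1\<^sub>m (2*n) + ?Z) d"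
    unfolding real_channel_alt rT_def using z by auto
  have "real_channel n (sc_T n A Om ?Z) (sc_N A Y (?c \<cdot>\<^sub>m 1\<^sub>m (2*n) + ?Z)) (sc_d A db d)"
    by (rule out_real[OF RS _ _ _ d _ r]) auto
  then show ?thesis unfolding real_channel_alt by blast
qed

lemma scN_entry:
  fixes A E Y :: "real mat"
  assumes A: "A \<in> carrier_mat m m" and E: "E \<in> carrier_mat m m" and Y: "Y \<in> carrier_mat m m"
  and x: "x < m" and y: "y < m"
  shows "(sc_N A Y (c \<cdot>\<^sub>m 1\<^sub>m m + E))$$(x,y) = c * (A * transpose_mat A)$$(x,y) + (A * E * transpose_mat A)$$(x,y) + Y$$(x,y)"
proof -
  have At: "transpose_mat A \<in> carrier_mat m m" using A by simp
  have "A * (c \<cdot>\<^sub>m 1\<^sub>m m + E) = A * (c \<cdot>\<^sub>m 1\<^sub>m m) + A * E"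
    by (rule mult_add_distrib_mat[OF A _ E]) auto
  also have "A * (c \<cdot>\<^sub>m 1\<^sub>m m) = c \<cdot>\<^sub>m A"
    using mult_smult_distrib[OF A, of "1\<^sub>m m" m c] A by simp
  finally have e1: "A * (c \<cdot>\<^sub>m 1\<^sub>m m + E) = c \<cdot>\<^sub>m A + A * E" .
  have "A * (c \<cdot>\<^sub>m 1\<^sub>m m + E) * transpose_mat A = (c \<cdot>\<^sub>m A) * transpose_mat A + A * E * transpose_mat A"
    unfolding e1 by (rule add_mult_distrib_mat[OF _ _ At], use A E in auto)
  also have "(c \<cdot>\<^sub>m A) * transpose_mat A = c \<cdot>\<^sub>m (A * transpose_mat A)"
    by (rule mult_smult_assoc_mat[OF A At])
  finally have e2: "A * (c \<cdot>\<^sub>m 1\<^sub>m m + E) * transpose_mat A = c \<cdot>\<^sub>m (A * transpose_mat A) + A * E * transpose_mat A" .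
  show ?thesis unfolding sc_N_def e2 using A E Y x y by simp
qed

lemma h3:
  assumes RS: "real_superchannel n A Om Y db"
  and N: "N \<in> carrier_mat (2*n) (2*n)" and Ns: "N = transpose_mat N"
  and z: "\<forall>k<n. \<forall>l<n. N$$(2*k,2*l+1) = 0"
  shows "\<forall>k<n. \<forall>l<n. (sc_N A Y N)$$(2*k,2*l+1) = 0"
proof (intro allI impI)
  fix k l assume kl: "k < n" "l < n"
  note F = sc_facts[OF RS]
  let ?Z = "0\<^sub>m (2*n) (2*n) :: real mat"
  have Nsym: "\<forall>i<2*n. \<forall>j<2*n. N$$(i,j) = N$$(j,i)"
  proof (intro allI impI)
    fix i j assume "i < 2*n" "j < 2*n"
    then show "N$$(i,j) = N$$(j,i)" using arg_cong[OF Ns, of "\<lambda>M. M$$(i,j)"] N by simp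
  qed
  have out: "(sc_N A Y (c \<cdot>\<^sub>m 1\<^sub>m (2*n) + E))$$(2*k,2*l+1) = 0"
    if E: "E \<in> carrier_mat (2*n) (2*n)" and Es: "\<forall>i<2*n. \<forall>j<2*n. E$$(i,j) = E$$(j,i)"
    and Ez: "\<forall>k<n. \<forall>l<n. E$$(2*k,2*l+1) = 0" and c: "c \<ge> cc n ?Z E" for E c
  proof -
    have r: "real_channel n ?Z (c \<cdot>\<^sub>m 1\<^sub>m (2*n) + E) (0\<^sub>v (2*n))"
      unfolding real_channel_alt rT_def using Ez E by auto
    have "real_channel n (sc_T n A Om ?Z) (sc_N A Y (c \<cdot>\<^sub>m 1\<^sub>m (2*n) + E)) (sc_d A db (0\<^sub>v (2*n)))"
      by (rule out_real[OF RS _ E Es _ c r]) auto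
    then show ?thesis unfolding real_channel_alt using kl by blast
  qed
  let ?x = "2*k" and ?y = "2*l+1"
  have xy: "?x < 2*n" "?y < 2*n" using kl by auto
  define g where "g = (A * transpose_mat A)$$(?x,?y)"
  define gN where "gN = (A * N * transpose_mat A)$$(?x,?y)"
  define y0 where "y0 = Y$$(?x,?y)"
  have gZ: "(A * ?Z * transpose_mat A)$$(?x,?y) = 0" using F(1) xy by simp
  have e1: "cc n ?Z ?Z * g + y0 = 0"
    using out[of ?Z "cc n ?Z ?Z"] scN_entry[OF F(1) _ F(3) xy, of ?Z "cc n ?Z ?Z"] gZ
    unfolding g_def y0_def by auto
  have e2: "(cc n ?Z ?Z + 1) * g + y0 = 0"
    using out[of ?Z "cc n ?Z ?Z + 1"] scN_entry[OF F(1) _ F(3) xy, of ?Z "cc n ?Z ?Z + 1"] gZ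
    unfolding g_def y0_def by auto
  have e3: "cc n ?Z N * g + gN + y0 = 0"
    using out[OF N Nsym z, of "cc n ?Z N"] scN_entry[OF F(1) N F(3) xy, of "cc n ?Z N"]
    unfolding g_def gN_def y0_def by auto
  from e1 e2 have g0: "g = 0" by (simp add: algebra_simps)
  with e1 have y00: "y0 = 0" by simp
  from e3 g0 y00 have "gN = 0" by simp
  moreover have "(sc_N A Y N)$$(?x,?y) = gN + y0"
    unfolding sc_N_def gN_def y0_def using F(1) F(3) N xy by simp
  ultimately show "(sc_N A Y N)$$(2*k,2*l+1) = 0" using y00 by simp
qed


lemma hh_zero: "hh x = 0 \<longleftrightarrow> x = 0" unfolding hh_def by auto
lemma hh_nonneg: "hh x \<ge> 0" unfolding hh_def by auto
lemma hh_mono: "(x = 0 \<Longrightarrow> y = 0) \<Longrightarrow> hh y \<le> hh x" unfolding hh_def by auto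

lemma tn_eo: "trace_norm (blk_eo n T) = 0 \<longleftrightarrow> (\<forall>k<n. \<forall>l<n. T$$(2*k+1,2*l) = 0)"
  using trace_norm_zero_iff[OF blk_carrier(1)] blk_eo_zero by blast
lemma tn_oe: "trace_norm (blk_oe n T) = 0 \<longleftrightarrow> (\<forall>k<n. \<forall>l<n. T$$(2*k,2*l+1) = 0)"
  using trace_norm_zero_iff[OF blk_carrier(2)] blk_oe_zero by blast
lemma tn_ee: "trace_norm (blk_ee n T) = 0 \<longleftrightarrow> (\<forall>k<n. \<forall>l<n. T$$(2*k+1,2*l+1) = 0)"
  using trace_norm_zero_iff[OF blk_carrier(3)] blk_ee_zero by blast

lemma I_GC_zero_iff: "I_GC n T N d = 0 \<longleftrightarrow> real_channel n T N d"
proof -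
  have "I_GC n T N d = 0 \<longleftrightarrow> hh (trace_norm (blk_eo n T)) = 0 \<and> hh (trace_norm (blk_oe n T) * trace_norm (blk_ee n T)) = 0
     \<and> hh (trace_norm (blk_oe n N)) = 0 \<and> hh (l1_norm (vec_e n d)) = 0"
    unfolding I_GC_def using hh_nonneg
    by (smt (verit, best))
  also have "\<dots> \<longleftrightarrow> real_channel n T N d"
    unfolding hh_zero mult_eq_0_iff tn_eo tn_oe tn_ee l1_zero real_channel_def by blast
  finally show ?thesis .
qed

theorem theorem4:
  fixes n :: nat
  assumes "n \<ge> 1"
  shows "(\<forall>T N d. gaussian_channel n T N d \<longrightarrow>
            I_GC n T N d \<ge> 0 \<and> (I_GC n T N d = 0 \<longleftrightarrow> real_channel n T N d))
       \<and> (\<forall>A Om Y db T N d. real_superchannel n A Om Y db \<and> gaussian_channel n T N d \<longrightarrow>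
            I_GC n (sc_T n A Om T) (sc_N A Y N) (sc_d A db d) \<le> I_GC n T N d)"
proof (intro conjI allI impI)
  fix T N d
  show "I_GC n T N d \<ge> 0" unfolding I_GC_def using hh_nonneg by (simp add: add_nonneg_nonneg)
  show "I_GC n T N d = 0 \<longleftrightarrow> real_channel n T N d" by (rule I_GC_zero_iff)
next
  fix A Om Y db T N d
  assume a: "real_superchannel n A Om Y db \<and> gaussian_channel n T N d"
  then have RS: "real_superchannel n A Om Y db" and GC: "gaussian_channel n T N d" by auto
  from GC have T: "T \<in> carrier_mat (2*n) (2*n)" and N: "N \<in> carrier_mat (2*n) (2*n)"
    and d: "d \<in> carrier_vec (2*n)" and Ns: "N = transpose_mat N"
    unfolding gaussian_channel_def by auto
  have i1: "hh (trace_norm (blk_eo n (sc_T n A Om T))) \<le> hh (trace_norm (blk_eo n T))"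
    by (rule hh_mono, unfold tn_eo, rule h1[OF RS T])
  have i2: "hh (trace_norm (blk_oe n (sc_T n A Om T)) * trace_norm (blk_ee n (sc_T n A Om T)))
       \<le> hh (trace_norm (blk_oe n T) * trace_norm (blk_ee n T))"
    by (rule hh_mono, unfold mult_eq_0_iff tn_oe tn_ee, rule h2[OF RS T])
  have i3: "hh (trace_norm (blk_oe n (sc_N A Y N))) \<le> hh (trace_norm (blk_oe n N))"
    by (rule hh_mono, unfold tn_oe, rule h3[OF RS N Ns])
  have i4: "hh (l1_norm (vec_e n (sc_d A db d))) \<le> hh (l1_norm (vec_e n d))"
    by (rule hh_mono, unfold l1_zero, rule h4[OF RS d])
  show "I_GC n (sc_T n A Om T) (sc_N A Y N) (sc_d A db d) \<le> I_GC n T N d"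
    unfolding I_GC_def using i1 i2 i3 i4 by linarith
qed


end
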